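(* Let $q=3^m$ with $m\ge 1$, let $\alpha$ be a primitive element of $\mathbb{F}_{q^2}$, and let $\mathcal{C}$ be the ternary cyclic code of length $q^2-1$ whose parity-check polynomial is $p_1(x)p_2(x)$, where $p_1(x)$ and $p_2(x)$ are the minimal polynomials over $\mathbb{F}_3$ of $\alpha^{-1}$ and $\alpha^{-(q+2)}$ respectively; equivalently $\mathcal{C}=\{(\mathrm{Tr}_{\mathbb{F}_{q^2}/\mathbb{F}_3}(a\alpha^{i(q+2)}+b\alpha^i))_{i=0}^{q^2-2}:\ a,b\in\mathbb{F}_{q^2}\}$. Then $\mathcal{C}$ has parameters $[q^2-1,4m,\frac{2q(q-2)}{3}]$, and its weight distribution is: weight $0$ occurs once; weight $\frac{2q(q-2)}{3}$ occurs $\frac{q^4-q^3-q^2+q}{6}$ times; weight $\frac{2q(q-1)}{3}$ occurs $q^3-q$ times; weight $\frac{2q^2}{3}$ occurs $\frac{q^4-q^3+q^2+q}{2}-1$ times; weight $\frac{2q(q+1)}{3}$ occurs $\frac{q^4-q^3-q^2+q}{3}$ times.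
   Context: $[n,k,d]$ denotes a linear code of length $n$, dimension $k$ and minimum Hamming distance $d$; weights are Hamming weights. $\mathrm{Tr}_{\mathbb{F}_{q^2}/\mathbb{F}_3}$ is the absolute trace. *)

theory Defs
  imports Main
begin

definition abs_trace3 :: "nat \<Rightarrow> 'a::field \<Rightarrow> 'a" where
  "abs_trace3 e x = (\<Sum>j<e. x ^ (3 ^ j))"

definition primitive_elem :: "'a::field \<Rightarrow> bool" where
  "primitive_elem \<alpha> \<longleftrightarrow> \<alpha> \<noteq> 0 \<and> (\<forall>x. x \<noteq> 0 \<longrightarrow> (\<exists>i::nat. x = \<alpha> ^ i))"

definition hweight :: "'a::zero list \<Rightarrow> nat" where
  "hweight c = length (filter (\<lambda>x. x \<noteq> 0) c)"

text \<open>The ternary code of length q^2-1 given by the trace description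
  (entries lie in the prime field F_3 of the ambient field of size q^2).\<close>
definition trace_code :: "nat \<Rightarrow> 'a::field \<Rightarrow> 'a list set" where
  "trace_code m \<alpha> = (let q = 3 ^ m in
     {map (\<lambda>i. abs_trace3 (2*m) (a * \<alpha> ^ (i * (q + 2)) + b * \<alpha> ^ i)) [0..<q^2 - 1]
      | a b. True})"

definition ternary_dim :: "'a list set \<Rightarrow> nat" where
  "ternary_dim C = (THE k. card C = 3 ^ k)"

text \<open>Minimum Hamming distance of a linear code = minimum nonzero weight.\<close>
definition min_dist :: "'a::zero list set \<Rightarrow> nat" where
  "min_dist C = Min {hweight c | c. c \<in> C \<and> hweight c \<noteq> 0}"

end

theory Submission
  imports Defs "HOL-Computational_Algebra.Polynomial"
begin

lemma card_times_zero:
  fixes x :: "'a::{finite,ring_1}"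
  shows "of_nat (card (UNIV::'a set)) * x = 0"
proof -
  have "(\<Sum>y\<in>UNIV. y + x) = (\<Sum>y\<in>(UNIV::'a set). y)"
    by (rule sum.reindex_bij_witness[of _ "\<lambda>y. y - x" "\<lambda>y. y + x"]) auto
  then show ?thesis by (simp add: sum.distrib)
qed

lemma frob3:
  fixes x y :: "'a::comm_ring_1"
  assumes "(3::'a) = 0"
  shows "(x + y) ^ 3 = x ^ 3 + y ^ 3"
proof -
  have "(x + y) ^ 3 = x ^ 3 + y ^ 3 + 3 * (x^2*y + x*y^2)"
    by (simp add: power2_eq_square power3_eq_cube algebra_simps)
  then show ?thesis using assms by simp
qed

lemma frob3_pow:
  fixes x y :: "'a::comm_ring_1"
  assumes "(3::'a) = 0"
  shows "(x + y) ^ (3^j) = x ^ (3^j) + y ^ (3^j)"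
proof (induction j)
  case 0 then show ?case by simp
next
  case (Suc j)
  have "(x + y) ^ (3^Suc j) = ((x + y) ^ (3^j)) ^ 3" by (simp add: power_mult[symmetric] mult.commute)
  also have "\<dots> = (x ^ (3^j)) ^ 3 + (y ^ (3^j)) ^ 3" using Suc frob3[OF assms] by simp
  also have "\<dots> = x ^ (3^Suc j) + y ^ (3^Suc j)" by (simp add: power_mult[symmetric] mult.commute)
  finally show ?case .
qed

lemma neg_pow3:
  fixes x :: "'a::comm_ring_1"
  shows "(- x) ^ (3^j) = - (x ^ (3^j))"
proof -
  have "odd ((3::nat)^j)" by simp
  then show ?thesis by (simp add: power_minus_odd)
qed

lemma frob3_diff:
  fixes x y :: "'a::comm_ring_1"
  assumes "(3::'a) = 0"
  shows "(x - y) ^ (3^j) = x ^ (3^j) - y ^ (3^j)"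
  using frob3_pow[OF assms, of x "-y" j] neg_pow3[of y j] by simp

lemma frob3_sum:
  fixes f :: "'b \<Rightarrow> 'a::comm_ring_1"
  assumes "(3::'a) = 0"
  shows "(\<Sum>i\<in>A. f i) ^ (3^j) = (\<Sum>i\<in>A. f i ^ (3^j))"
proof (induction A rule: infinite_finite_induct)
  case (infinite A) then show ?case by (simp add: zero_power)
next
  case empty then show ?case by (simp add: zero_power)
next
  case (insert x F) then show ?case by (simp add: frob3_pow[OF assms])
qed

lemma tr_add:
  fixes x y :: "'a::field"
  assumes "(3::'a) = 0"
  shows "abs_trace3 e (x + y) = abs_trace3 e x + abs_trace3 e y"
  by (simp add: abs_trace3_def frob3_pow[OF assms] sum.distrib)

lemma tr_neg:
  fixes x :: "'a::field"
  shows "abs_trace3 e (- x) = - abs_trace3 e x"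
  by (simp add: abs_trace3_def neg_pow3 sum_negf)

lemma tr_diff:
  fixes x y :: "'a::field"
  assumes "(3::'a) = 0"
  shows "abs_trace3 e (x - y) = abs_trace3 e x - abs_trace3 e y"
  using tr_add[OF assms, of e x "-y"] tr_neg[of e y] by simp

lemma tr_zero[simp]: "abs_trace3 e 0 = 0"
  by (simp add: abs_trace3_def power_0_left)

lemma tr_cube:
  fixes x :: "'a::field"
  assumes "(3::'a) = 0"
  shows "abs_trace3 e x ^ 3 = abs_trace3 e x - x + x ^ (3^e)"
proof -
  have "abs_trace3 e x ^ 3 = (\<Sum>j<e. x ^ (3^Suc j))"
    using frob3_sum[OF assms, of "\<lambda>j. x ^ (3^j)" "{..<e}" 1]
    by (simp add: abs_trace3_def power_mult[symmetric] mult.commute)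
  also have "\<dots> = (\<Sum>j<Suc e. x ^ (3^j)) - x"
  proof -
    have "(\<Sum>j<Suc e. x ^ (3^j)) = x + (\<Sum>j<e. x ^ (3^Suc j))"
      by (subst sum.lessThan_Suc_shift) simp
    then show ?thesis by simp
  qed
  also have "\<dots> = abs_trace3 e x - x + x ^ (3^e)"
    by (simp add: abs_trace3_def)
  finally show ?thesis .
qed

lemma cube_eq_self:
  fixes t :: "'a::field"
  assumes "t ^ 3 = t"
  shows "t = 0 \<or> t = 1 \<or> t = -1"
proof -
  have "t * (t - 1) * (t + 1) = 0" using assms
    by (simp add: power3_eq_cube algebra_simps)
  then show ?thesis by (auto simp: eq_neg_iff_add_eq_0)
qed

lemma tr_vals:
  fixes x :: "'a::field"
  assumes "(3::'a) = 0" "x ^ (3^e) = x"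
  shows "abs_trace3 e x = 0 \<or> abs_trace3 e x = 1 \<or> abs_trace3 e x = -1"
proof -
  have "abs_trace3 e x ^ 3 = abs_trace3 e x" using tr_cube[OF assms(1)] assms(2) by simp
  then show ?thesis by (rule cube_eq_self)
qed


lemma two_eq_neg1:
  assumes "(3::'a::comm_ring_1) = 0"
  shows "(2::'a) = -1"
proof -
  have "(2::'a) = 3 - 1" by simp
  then show ?thesis using assms by simp
qed

lemma one_neq_neg1:
  assumes "(3::'a::field) = 0"
  shows "(1::'a) \<noteq> -1"
proof
  assume "(1::'a) = -1"
  then have "(2::'a) = 0" by (simp add: eq_neg_iff_add_eq_0)
  then have "(1::'a) = 0" using assms by (metis add_diff_cancel_left' diff_zero numeral_Bit1 numeral_One one_add_one)
  then show False by simp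
qed

lemma fiber3:
  fixes L :: "'a::field \<Rightarrow> 'a"
  assumes c3: "(3::'a) = 0" and fin: "finite S"
    and add: "\<And>x y. x \<in> S \<Longrightarrow> y \<in> S \<Longrightarrow> x + y \<in> S"
    and sub: "\<And>x y. x \<in> S \<Longrightarrow> y \<in> S \<Longrightarrow> x - y \<in> S"
    and lin: "\<And>x y. L (x + y) = L x + L y"
    and vals: "\<And>x. x \<in> S \<Longrightarrow> L x = 0 \<or> L x = 1 \<or> L x = -1"
    and w: "w \<in> S" "L w = 1"
    and t: "t = 0 \<or> t = 1 \<or> t = -1"
  shows "card {x\<in>S. L x = t} = card S div 3"
proof -
  define f where "f t = card {x\<in>S. L x = t}" for t
  have Lsub: "L (x - w) = L x - 1" for x
    using lin[of "x - w" w] w(2) by (simp add: algebra_simps)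
  have shift: "f s = f (s + 1)" for s
  proof -
    have "bij_betw (\<lambda>x. x + w) {x\<in>S. L x = s} {x\<in>S. L x = s + 1}"
      by (rule bij_betw_byWitness[of _ "\<lambda>x. x - w"]) (auto simp: add sub w lin Lsub)
    then show ?thesis unfolding f_def by (rule bij_betw_same_card)
  qed
  have m1: "(1::'a) + 1 = -1" using two_eq_neg1[OF c3] by simp
  have f01: "f 0 = f 1" using shift[of 0] by simp
  have f1m: "f 1 = f (-1)" using shift[of 1] m1 by (metis one_add_one)
  have "S = {x\<in>S. L x = 0} \<union> {x\<in>S. L x = 1} \<union> {x\<in>S. L x = -1}" using vals by auto
  then have "card S = card ({x\<in>S. L x = 0} \<union> {x\<in>S. L x = 1} \<union> {x\<in>S. L x = -1})" by simp
  also have "\<dots> = f 0 + f 1 + f (-1)"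
  proof -
    have n: "(1::'a) \<noteq> -1" by (rule one_neq_neg1[OF c3])
    have "card ({x\<in>S. L x = 0} \<union> {x\<in>S. L x = 1} \<union> {x\<in>S. L x = -1})
      = card ({x\<in>S. L x = 0} \<union> {x\<in>S. L x = 1}) + card {x\<in>S. L x = -1}"
      by (rule card_Un_disjoint) (use fin n in auto)
    also have "card ({x\<in>S. L x = 0} \<union> {x\<in>S. L x = 1}) = card {x\<in>S. L x = 0} + card {x\<in>S. L x = 1}"
      by (rule card_Un_disjoint) (use fin in auto)
    finally show ?thesis unfolding f_def .
  qed
  finally have "card S = 3 * f 0" using f01 f1m by simp
  then show ?thesis using t f01 f1m unfolding f_def by auto
qed

lemma tr_nonzero:
  fixes dummy :: "'a::{field,finite}"
  assumes "card (UNIV::'a set) = 3^e" "e \<ge> 1"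
  shows "\<exists>z::'a. abs_trace3 e z \<noteq> 0"
proof (rule ccontr)
  assume "\<not> ?thesis"
  then have all: "abs_trace3 e z = 0" for z :: 'a by simp
  define P :: "'a poly" where "P = (\<Sum>j<e. monom 1 (3^j))"
  have polyP: "poly P x = abs_trace3 e x" for x
    by (simp add: P_def poly_sum poly_monom abs_trace3_def)
  have cP: "coeff P (3^(e-1)) = 1"
  proof -
    have "coeff P (3^(e-1)) = (\<Sum>j<e. if 3^j = (3::nat)^(e-1) then 1 else 0)"
      by (simp add: P_def coeff_sum)
    also have "\<dots> = (\<Sum>j\<in>{e-1}. 1)"
      by (rule sum.mono_neutral_cong_right) (use assms in auto)
    finally show ?thesis by simp
  qed
  then have P0: "P \<noteq> 0" by auto
  have "degree P \<le> 3^(e-1)"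
  proof (rule degree_le, intro allI impI)
    fix i :: nat assume i: "3^(e-1) < i"
    have "\<And>j. j < e \<Longrightarrow> (3::nat)^j \<noteq> i"
    proof -
      fix j assume "j < e"
      then have "(3::nat)^j \<le> 3^(e-1)" by (intro power_increasing) auto
      then show "(3::nat)^j \<noteq> i" using i by auto
    qed
    then show "coeff P i = 0" by (simp add: P_def coeff_sum)
  qed
  moreover have "card {x. poly P x = 0} \<le> degree P" by (rule card_poly_roots_bound[OF P0])
  moreover have "{x. poly P x = 0} = UNIV" using all polyP by auto
  ultimately have "card (UNIV::'a set) \<le> 3^(e-1)" by simp
  then have "(3::nat)^e \<le> 3^(e-1)" using assms by simp
  moreover have "(3::nat)^(e-1) < 3^e" using assms by (intro power_strict_increasing) auto
  ultimately show False using assms(2) by simp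
qed


lemma sum_lessThan_add_split:
  "(\<Sum>j<(a::nat)+b. f j) = (\<Sum>j<a. f j) + (\<Sum>j<b. f (a+j))"
  by (induction b) (simp_all add: add_ac)

locale F3setup =
  fixes m :: nat and \<alpha> :: "'a::{field,finite}"
  assumes m1: "m \<ge> 1" and cardF: "card (UNIV::'a set) = (3^m)^2"
    and prim: "primitive_elem \<alpha>"
begin

abbreviation q :: nat where "q \<equiv> 3^m"

lemma cardF2: "card (UNIV::'a set) = 3^(2*m)"
  using cardF by (simp add: power_mult[symmetric] mult.commute)

lemma c3: "(3::'a) = 0"
proof -
  have "of_nat (card (UNIV::'a set)) * (1::'a) = 0" by (rule card_times_zero)
  then have "(3::'a)^(2*m) = 0" using cardF2 by simp
  then show ?thesis by simp
qed

lemma q_ge3: "q \<ge> 3"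
proof -
  have "(3::nat)^1 \<le> 3^m" by (rule power_increasing) (use m1 in auto)
  then show ?thesis by simp
qed

lemma q_odd: "odd q" by simp

lemma fermat1:
  assumes "x \<noteq> (0::'a)"
  shows "x ^ (q^2 - 1) = 1"
proof -
  let ?S = "UNIV - {0::'a}"
  have "(\<Prod>y\<in>?S. x * y) = (\<Prod>y\<in>?S. y)"
    by (rule prod.reindex_bij_witness[of _ "\<lambda>y. y / x" "\<lambda>y. x * y"]) (use assms in auto)
  then have "x ^ card ?S * (\<Prod>y\<in>?S. y) = (\<Prod>y\<in>?S. y)"
    by (simp add: prod.distrib)
  moreover have "(\<Prod>y\<in>?S. y) \<noteq> 0" by (simp add: prod_zero_iff)
  ultimately have "x ^ card ?S = 1" by simp
  moreover have "card ?S = q^2 - 1" using cardF by (simp add: card_Diff_singleton)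
  ultimately show ?thesis by simp
qed

lemma fermat: "x ^ (q^2) = (x::'a)"
proof (cases "x = 0")
  case True then show ?thesis by simp
next
  case False
  have "q^2 = Suc (q^2 - 1)" using q_ge3 by simp
  then have "x ^ (q^2) = x * x ^ (q^2 - 1)" by (metis power_Suc)
  then show ?thesis using fermat1[OF False] by simp
qed

lemma qpow_add: "(x + y) ^ q = x ^ q + (y::'a) ^ q"
  by (rule frob3_pow[OF c3])
lemma qpow_diff: "(x - y) ^ q = x ^ q - (y::'a) ^ q"
  by (rule frob3_diff[OF c3])
lemma qpow_neg: "(- x) ^ q = - ((x::'a) ^ q)"
  by (rule neg_pow3)

abbreviation n :: nat where "n \<equiv> q^2 - 1"

lemma alpha_nz: "\<alpha> \<noteq> 0" using prim by (simp add: primitive_elem_def)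

lemma alpha_n: "\<alpha> ^ n = 1" using fermat1[OF alpha_nz] .

lemma alpha_img: "(\<lambda>i. \<alpha> ^ i) ` {..<n} = UNIV - {0}"
proof
  show "(\<lambda>i. \<alpha> ^ i) ` {..<n} \<subseteq> UNIV - {0}" using alpha_nz by auto
  show "UNIV - {0} \<subseteq> (\<lambda>i. \<alpha> ^ i) ` {..<n}"
  proof
    fix x assume "x \<in> UNIV - {0::'a}"
    then obtain i where i: "x = \<alpha> ^ i" using prim unfolding primitive_elem_def by auto
    have "\<alpha> ^ i = \<alpha> ^ (i mod n)"
    proof -
      have "\<alpha> ^ i = \<alpha> ^ (n * (i div n) + i mod n)" by simp
      also have "\<dots> = (\<alpha> ^ n) ^ (i div n) * \<alpha> ^ (i mod n)" by (simp only: power_add power_mult)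
      finally show ?thesis using alpha_n by simp
    qed
    moreover have "i mod n < n" using mult_le_mono[OF q_ge3 q_ge3] by (intro mod_less_divisor) (simp add: power2_eq_square)
    ultimately show "x \<in> (\<lambda>i. \<alpha> ^ i) ` {..<n}" using i by auto
  qed
qed

lemma card_nz: "card (UNIV - {0::'a}) = n"
  using cardF by (simp add: card_Diff_singleton)

lemma alpha_inj: "inj_on (\<lambda>i. \<alpha> ^ i) {..<n}"
proof -
  have "card ((\<lambda>i. \<alpha> ^ i) ` {..<n}) = n" using alpha_img card_nz by simp
  then show ?thesis by (intro eq_card_imp_inj_on) auto
qed

lemma alpha_ne1: "0 < k \<Longrightarrow> k < n \<Longrightarrow> \<alpha> ^ k \<noteq> 1"
  using alpha_inj unfolding inj_on_def
  by (metis lessThan_iff less_nat_zero_code not_gr_zero power_0)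

end

context F3setup
begin

definition K :: "'a set" where "K = {x. x ^ q = x}"

lemma K_add: "x \<in> K \<Longrightarrow> y \<in> K \<Longrightarrow> x + y \<in> K" by (simp add: K_def qpow_add)
lemma K_diff: "x \<in> K \<Longrightarrow> y \<in> K \<Longrightarrow> x - y \<in> K" by (simp add: K_def qpow_diff)
lemma K_neg: "x \<in> K \<Longrightarrow> - x \<in> K" by (simp add: K_def qpow_neg)
lemma K_mult: "x \<in> K \<Longrightarrow> y \<in> K \<Longrightarrow> x * y \<in> K" by (simp add: K_def power_mult_distrib)
lemma K_divide: "x \<in> K \<Longrightarrow> y \<in> K \<Longrightarrow> x / y \<in> K" by (simp add: K_def power_divide)
lemma K_0: "0 \<in> K" by (simp add: K_def)
lemma K_1: "1 \<in> K" by (simp add: K_def)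
lemma K_m1: "-1 \<in> K" using K_neg[OF K_1] .
lemma K_pow: "x \<in> K \<Longrightarrow> x ^ k \<in> K" by (induction k) (simp_all add: K_1 K_mult)

lemma two_nz: "(2::'a) \<noteq> 0"
  using two_eq_neg1[OF c3] by (metis neg_equal_0_iff_equal zero_neq_one)

lemma neg_self: "(x::'a) = - x \<Longrightarrow> x = 0"
proof -
  assume "x = - x"
  then have "x + x = 0" using eq_neg_iff_add_eq_0[of x x] by blast
  then have "2 * x = 0" by (simp only: mult_2)
  then show "x = 0" using two_nz by simp
qed

lemma m2y: "- 2 * (y::'a) = y"
proof -
  have "- 2 * y = - (2 * y)" by simp
  also have "2 * y = - y" using two_eq_neg1[OF c3] by (metis mult_minus1)
  finally show ?thesis by simp
qed

definition th :: 'a where "th = \<alpha> ^ ((q + 1) div 2)"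

lemma th_nz: "th \<noteq> 0" using alpha_nz by (simp add: th_def)

lemma th_q: "th ^ q = - th"
proof -
  obtain t where t: "q = 2 * t + 1" using q_odd by (metis oddE)
  define k where "k = (t + 1) * (2 * t)"
  have e1: "(q + 1) div 2 = t + 1" using t by simp
  have e2: "q - 1 = 2 * t" using t by simp
  have k_th: "th ^ (q - 1) = \<alpha> ^ k" unfolding th_def e1 e2 k_def by (rule power_mult[symmetric])
  have sq: "(2*t+1)^2 = 2*k + 1" by (simp add: k_def power2_eq_square algebra_simps)
  have nk: "n = 2 * k" using sq t by simp
  have "t \<ge> 1" using q_ge3 t by simp
  then have kpos: "0 < k" "k < n" using nk by (simp_all add: k_def)
  have h1: "(\<alpha> ^ k) ^ 2 = 1" using alpha_n nk by (metis power_mult mult.commute)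
  have h2: "\<alpha> ^ k \<noteq> 1" using alpha_ne1 kpos by simp
  have "(\<alpha> ^ k - 1) * (\<alpha> ^ k + 1) = 0" using h1 by (simp add: algebra_simps power2_eq_square)
  then have "\<alpha> ^ k = -1" using h2 by (simp add: eq_neg_iff_add_eq_0)
  then have "th ^ (q - 1) = -1" using k_th by simp
  moreover have "th ^ q = th ^ (q - 1) * th"
  proof -
    have "q = Suc (q - 1)" using q_ge3 by simp
    then show ?thesis by (metis power_Suc2)
  qed
  ultimately show ?thesis by simp
qed

definition d :: 'a where "d = th ^ 2"

lemma d_K: "d \<in> K"
proof -
  have "(th ^ 2) ^ q = (th ^ q) ^ 2" by (metis power_mult mult.commute)
  then show ?thesis unfolding K_def d_def by (simp add: th_q)
qed
lemma d_nz: "d \<noteq> 0" using th_nz by (simp add: d_def)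

lemma th_notK: "th \<notin> K"
  using th_q th_nz neg_self unfolding K_def by force

lemma conj_K: "u \<in> K \<Longrightarrow> v \<in> K \<Longrightarrow> (u + v * th) ^ q = u - v * th"
  by (simp add: qpow_add power_mult_distrib th_q K_def)

lemma qq: "((y::'a) ^ q) ^ q = y"
  using fermat[of y] by (simp add: power_mult[symmetric] power2_eq_square)

definition Dm :: "'a \<times> 'a \<Rightarrow> 'a" where "Dm p = snd p + fst p * th"

lemma Dm_bij: "bij_betw Dm (K \<times> K) UNIV"
proof (rule bij_betw_imageI)
  show "inj_on Dm (K \<times> K)"
  proof (rule inj_onI)
    fix p p' assume p: "p \<in> K \<times> K" "p' \<in> K \<times> K" and e: "Dm p = Dm p'"
    obtain v u v' u' where pp: "p = (v, u)" "p' = (v', u')" by (cases p, cases p')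
    have uv: "u \<in> K" "v \<in> K" "u' \<in> K" "v' \<in> K" using p pp by auto
    have e': "u + v * th = u' + v' * th" using e pp by (simp add: Dm_def)
    show "p = p'"
    proof (cases "v = v'")
      case True then show ?thesis using e' pp by simp
    next
      case False
      then have "th = (u - u') / (v' - v)" using e'
        by (simp add: field_simps)
      then have "th \<in> K" using uv by (simp add: K_diff K_divide)
      then show ?thesis using th_notK by simp
    qed
  qed
  show "Dm ` (K \<times> K) = UNIV"
  proof -
    have "y \<in> Dm ` (K \<times> K)" for y :: 'a
    proof -
    define u where "u = - (y + y ^ q)"
    define v where "v = - (y - y ^ q) / th"
    have "u ^ q = - (y ^ q + y)" unfolding u_def by (simp only: qpow_neg qpow_add qq)
    then have "u ^ q = u" unfolding u_def by (metis add.commute)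
    then have "u \<in> K" unfolding K_def by blast
    moreover have "v \<in> K"
    proof -
      have "v ^ q = (- (y - y ^ q)) ^ q / th ^ q" unfolding v_def by (rule power_divide)
      also have "\<dots> = - (y ^ q - y) / (- th)" by (simp only: qpow_neg qpow_diff qq th_q)
      also have "\<dots> = v" unfolding v_def by (metis minus_diff_eq minus_divide_left minus_divide_right)
      finally have "v ^ q = v" .
      then show ?thesis unfolding K_def by blast
    qed
    moreover have "Dm (v, u) = y"
    proof -
      have "v * th = - (y - y ^ q)" using th_nz by (simp add: v_def)
      then have "Dm (v, u) = - 2 * y" unfolding Dm_def u_def by simp
      then show ?thesis using m2y[of y] by simp
    qed
    ultimately show "y \<in> Dm ` (K \<times> K)" by (intro image_eqI[of _ _ "(v,u)"]) auto
    qed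
    then show ?thesis by auto
  qed
qed

lemma card_K: "card K = q"
proof -
  have "card (K \<times> K) = card (UNIV::'a set)" using Dm_bij by (rule bij_betw_same_card)
  then have "card K ^ 2 = q ^ 2" using cardF by (simp add: card_cartesian_product power2_eq_square)
  then show ?thesis by (simp add: power2_eq_iff_nonneg)
qed

lemma finK: "finite K" by simp

end

lemma ring_id:
  fixes u v b g t :: "'a::comm_ring_1"
  shows "(u - v*t)*(u+v*t)^2 + (u+v*t)*(u-v*t)^2 + ((b+g*t)*(u+v*t) + (b-g*t)*(u-v*t))
     = 2 * (u*(u^2 - t^2*v^2) + b*u + g*v*t^2)"
  by (simp add: algebra_simps power2_eq_square)

context F3setup
begin

abbreviation Tq :: "'a \<Rightarrow> 'a" where "Tq \<equiv> abs_trace3 m"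
abbreviation Tr :: "'a \<Rightarrow> 'a" where "Tr \<equiv> abs_trace3 (2*m)"

lemma two_mul: "2 * (y::'a) = - y"
  using m2y[of y] by (metis minus_equation_iff mult_minus_left)

lemma tr_split: "Tr z = Tq (z + z ^ q)"
proof -
  have "Tr z = (\<Sum>j<m+m. z ^ (3^j))" by (simp add: abs_trace3_def mult_2)
  also have "\<dots> = (\<Sum>j<m. z ^ (3^j)) + (\<Sum>j<m. z ^ (3^(m+j)))" by (rule sum_lessThan_add_split)
  also have "(\<Sum>j<m. z ^ (3^(m+j))) = (\<Sum>j<m. (z ^ q) ^ (3^j))"
    by (simp add: power_add power_mult)
  finally have "Tr z = Tq z + Tq (z ^ q)" by (simp add: abs_trace3_def)
  then show ?thesis by (simp add: tr_add[OF c3])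
qed

lemma Tq_vals: "x \<in> K \<Longrightarrow> Tq x = 0 \<or> Tq x = 1 \<or> Tq x = -1"
  by (rule tr_vals[OF c3]) (simp add: K_def)

lemma Tq_cube: "x \<in> K \<Longrightarrow> Tq (x ^ 3) = Tq x"
proof -
  assume x: "x \<in> K"
  have "Tq (x ^ 3) = (\<Sum>j<m. (x ^ (3^j)) ^ 3)" unfolding abs_trace3_def
    by (intro sum.cong refl) (metis power_mult mult.commute)
  also have "\<dots> = (\<Sum>j<m. x ^ (3^j)) ^ 3"
    using frob3_sum[OF c3, of "\<lambda>j. x ^ (3^j)" "{..<m}" 1] by simp
  also have "\<dots> = Tq x ^ 3" by (simp add: abs_trace3_def)
  also have "\<dots> = Tq x" using tr_cube[OF c3, of m x] x by (simp add: K_def)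
  finally show ?thesis .
qed

lemma zzq_K: "z + z ^ q \<in> K"
proof -
  have "(z + z ^ q) ^ q = z ^ q + z" by (simp only: qpow_add qq)
  then show ?thesis unfolding K_def by (simp add: add.commute)
qed

lemma Tr_vals: "Tr z = 0 \<or> Tr z = 1 \<or> Tr z = -1"
  using Tq_vals[OF zzq_K[of z]] tr_split[of z] by simp

lemma w0K: "\<exists>w\<in>K. Tq w = 1"
proof -
  obtain z :: 'a where z: "Tr z \<noteq> 0" using tr_nonzero[of "2*m"] cardF2 m1 by auto
  let ?k = "z + z ^ q"
  have k: "?k \<in> K" "Tq ?k \<noteq> 0" using zzq_K z tr_split by auto
  show ?thesis
  proof (cases "Tq ?k = 1")
    case True then show ?thesis using k by blast
  next
    case False
    then have "Tq ?k = -1" using Tq_vals[OF k(1)] k(2) by auto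
    moreover have "Tq (- ?k) = - Tq ?k" by (rule tr_neg)
    ultimately have "Tq (- ?k) = 1" by (simp only: minus_minus)
    then show ?thesis using K_neg[OF k(1)] by blast
  qed
qed

lemma w0F: "\<exists>w. Tr w = 1"
proof -
  obtain z :: 'a where z: "Tr z \<noteq> 0" using tr_nonzero[of "2*m"] cardF2 m1 by auto
  show ?thesis
  proof (cases "Tr z = 1")
    case True then show ?thesis by blast
  next
    case False
    then have "Tr z = -1" using Tr_vals[of z] z by auto
    then have "Tr (- z) = 1" by (simp add: tr_neg)
    then show ?thesis by blast
  qed
qed

lemma fiberK:
  assumes "t = 0 \<or> t = 1 \<or> t = -1"
  shows "card {x\<in>K. Tq x = t} = q div 3"
proof -
  obtain w where w: "w \<in> K" "Tq w = 1" using w0K by blast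
  have "card {x\<in>K. Tq x = t} = card K div 3"
    by (rule fiber3[OF c3 finK K_add K_diff tr_add[OF c3] Tq_vals w assms])
  then show ?thesis by (simp add: card_K)
qed

lemma fiberF:
  assumes "t = 0 \<or> t = 1 \<or> t = -1"
  shows "card {x. Tr x = t} = q^2 div 3"
proof -
  obtain w where w: "Tr w = 1" using w0F by blast
  have "card {x\<in>UNIV. Tr x = t} = card (UNIV::'a set) div 3"
    by (rule fiber3[OF c3 _ _ _ tr_add[OF c3] Tr_vals _ w assms]) auto
  then show ?thesis by (simp add: cardF)
qed

lemma key_identity:
  assumes K: "u \<in> K" "v \<in> K" "b \<in> K" "g \<in> K"
  shows "Tr ((u + v*th) ^ (q+2) + (b + g*th) * (u + v*th))
       = Tq (u * (d * v^2 - (1 + b)) - g * d * v)"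
proof -
  define y where "y = u + v*th"
  define c where "c = b + g*th"
  define z where "z = y ^ (q+2) + c * y"
  have yq: "y ^ q = u - v*th" unfolding y_def by (rule conj_K[OF K(1,2)])
  have cq: "c ^ q = b - g*th" unfolding c_def by (rule conj_K[OF K(3,4)])
  have zq: "z ^ q = y * (y^q)^2 + c^q * y^q"
  proof -
    have "z ^ q = (y ^ (q+2)) ^ q + (c * y) ^ q" unfolding z_def by (rule qpow_add)
    also have "(y ^ (q+2)) ^ q = (y ^ q) ^ q * ((y ^ q) ^ 2)"
      by (metis power_add power_mult mult.commute)
    also have "(c * y) ^ q = c ^ q * y ^ q" by (rule power_mult_distrib)
    finally show ?thesis by (simp only: qq)
  qed
  have z1: "z = y^q * y^2 + c * y" unfolding z_def by (simp add: power_add power2_eq_square)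
  have "z + z ^ q = (u - v*th)*(u+v*th)^2 + (u+v*th)*(u-v*th)^2 + ((b+g*th)*(u+v*th) + (b-g*th)*(u-v*th))"
    unfolding zq unfolding z1 unfolding yq cq unfolding y_def c_def by (simp add: algebra_simps)
  also have "\<dots> = 2 * (u*(u^2 - th^2*v^2) + b*u + g*v*th^2)" by (rule ring_id)
  also have "\<dots> = - (u*(u^2 - d*v^2) + b*u + g*v*d)" by (simp only: two_mul d_def)
  also have "\<dots> = - (u ^ 3) + (u * (d * v^2 - (1 + b)) - g * d * v + u)"
    by (simp add: algebra_simps power2_eq_square power3_eq_cube)
  finally have zz: "z + z ^ q = - (u ^ 3) + (u * (d * v^2 - (1 + b)) - g * d * v + u)" .
  have "Tr z = Tq (z + z ^ q)" by (rule tr_split)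
  also have "\<dots> = - Tq (u ^ 3) + (Tq (u * (d * v^2 - (1 + b)) - g * d * v) + Tq u)"
    unfolding zz by (simp only: tr_add[OF c3] tr_neg)
  also have "\<dots> = Tq (u * (d * v^2 - (1 + b)) - g * d * v)"
    using Tq_cube[OF K(1)] by simp
  finally show ?thesis unfolding z_def y_def c_def .
qed

end

lemma card_pairs_fst:
  assumes "finite A" "finite B"
  shows "card {p \<in> A \<times> B. P (fst p) (snd p)} = (\<Sum>a\<in>A. card {b\<in>B. P a b})"
proof -
  have "{p \<in> A \<times> B. P (fst p) (snd p)} = Sigma A (\<lambda>a. {b\<in>B. P a b})" by auto
  then show ?thesis using assms by simp
qed

lemma card_pairs_snd:
  assumes "finite A" "finite B"
  shows "card {p \<in> A \<times> B. P (fst p) (snd p)} = (\<Sum>b\<in>B. card {a\<in>A. P a b})"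
proof -
  have "{p \<in> A \<times> B. P (fst p) (snd p)} = (\<lambda>(b,a). (a,b)) ` Sigma B (\<lambda>b. {a\<in>A. P a b})" by auto
  moreover have "inj_on (\<lambda>(b,a). (a,b)) (Sigma B (\<lambda>b. {a\<in>A. P a b}))" by (auto simp: inj_on_def)
  ultimately have "card {p \<in> A \<times> B. P (fst p) (snd p)} = card (Sigma B (\<lambda>b. {a\<in>A. P a b}))"
    by (simp add: card_image)
  then show ?thesis using assms by simp
qed

context F3setup
begin

abbreviation r :: nat where "r \<equiv> q div 3"

lemma q_r: "q = 3 * r"
proof -
  have "q = 3 * 3^(m-1)" using m1 by (metis Suc_diff_1 less_le_trans power_Suc zero_less_one)
  then show ?thesis by simp
qed

lemma r_pos: "r \<ge> 1" using q_ge3 by simp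

lemma card_via_Dm: "card {y. P y} = card {p \<in> K \<times> K. P (Dm p)}"
proof -
  have "bij_betw Dm {p \<in> K \<times> K. P (Dm p)} {y. P y}"
    using Dm_bij unfolding bij_betw_def inj_on_def by auto
  then show ?thesis by (simp add: bij_betw_same_card)
qed

lemma inner_count:
  assumes c0: "c0 \<in> K" and t: "t = 0 \<or> t = 1 \<or> t = -1"
  shows "card {u\<in>K. Tq (u * c0) = t} = (if c0 = 0 then (if t = 0 then q else 0) else r)"
proof (cases "c0 = 0")
  case True
  then show ?thesis by (cases "t = 0") (simp_all add: card_K)
next
  case False
  have "bij_betw (\<lambda>u. u * c0) {u\<in>K. Tq (u * c0) = t} {w\<in>K. Tq w = t}"
    by (rule bij_betw_byWitness[of _ "\<lambda>w. w / c0"]) (use False c0 in \<open>auto simp: K_mult K_divide\<close>)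
  then have "card {u\<in>K. Tq (u * c0) = t} = card {w\<in>K. Tq w = t}" by (rule bij_betw_same_card)
  also have "\<dots> = r" by (rule fiberK[OF t])
  finally show ?thesis using False by simp
qed

definition Z1 :: "'a \<Rightarrow> nat" where "Z1 c = card {y. Tr (y ^ (q+2) + c * y) = 0}"

definition H :: "'a \<Rightarrow> 'a \<Rightarrow> 'a \<Rightarrow> nat" where
  "H b g v = (if d * v^2 - (1 + b) = 0 then (if Tq (g * d * v) = 0 then q else 0) else r)"

lemma Z1_sum:
  assumes b: "b \<in> K" and g: "g \<in> K"
  shows "Z1 (b + g * th) = (\<Sum>v\<in>K. H b g v)"
proof -
  have "Z1 (b + g * th) = card {p \<in> K \<times> K. Tr ((Dm p) ^ (q+2) + (b + g * th) * Dm p) = 0}"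
    unfolding Z1_def by (rule card_via_Dm)
  also have "{p \<in> K \<times> K. Tr ((Dm p) ^ (q+2) + (b + g * th) * Dm p) = 0}
     = {p \<in> K \<times> K. Tq (snd p * (d * (fst p)^2 - (1 + b))) = Tq (g * d * fst p)}"
  proof -
    have "Tr ((Dm p) ^ (q+2) + (b + g * th) * Dm p) = 0 \<longleftrightarrow>
          Tq (snd p * (d * (fst p)^2 - (1 + b))) = Tq (g * d * fst p)" if "p \<in> K \<times> K" for p
    proof -
      obtain v u where p: "p = (v, u)" by (cases p)
      have uv: "u \<in> K" "v \<in> K" using that p by auto
      have "Tr ((Dm p) ^ (q+2) + (b + g * th) * Dm p) = Tq (u * (d * v^2 - (1 + b)) - g * d * v)"
        unfolding p Dm_def fst_conv snd_conv by (rule key_identity[OF uv b g])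
      also have "\<dots> = Tq (u * (d * v^2 - (1 + b))) - Tq (g * d * v)" by (rule tr_diff[OF c3])
      finally show ?thesis using p by simp
    qed
    then show ?thesis by blast
  qed
  also have "card \<dots> = (\<Sum>v\<in>K. card {u\<in>K. Tq (u * (d * v^2 - (1 + b))) = Tq (g * d * v)})"
    by (rule card_pairs_fst) (simp_all add: finK)
  also have "\<dots> = (\<Sum>v\<in>K. H b g v)"
  proof (rule sum.cong[OF refl])
    fix v assume v: "v \<in> K"
    have c0: "d * v^2 - (1 + b) \<in> K" using v b d_K by (simp add: K_mult K_diff K_add K_1 K_pow)
    have gdv: "g * d * v \<in> K" using v g d_K by (simp add: K_mult)
    show "card {u\<in>K. Tq (u * (d * v^2 - (1 + b))) = Tq (g * d * v)} = H b g v"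
      unfolding H_def by (subst inner_count[OF c0 Tq_vals[OF gdv]]) auto
  qed
  finally show ?thesis .
qed

end

context F3setup
begin

definition R :: "'a \<Rightarrow> 'a set" where "R e = {v\<in>K. d * v^2 = e}"

lemma R_sub: "R e \<subseteq> K" by (auto simp: R_def)

lemma Z1_split:
  assumes b: "b \<in> K" and g: "g \<in> K"
  shows "Z1 (b + g * th) = (q - card (R (1+b))) * r + (\<Sum>v\<in>R (1+b). (if Tq (g * d * v) = 0 then q else 0))"
proof -
  let ?R = "R (1+b)"
  have "Z1 (b + g * th) = (\<Sum>v\<in>K. H b g v)" by (rule Z1_sum[OF b g])
  also have "\<dots> = (\<Sum>v\<in>K - ?R. H b g v) + (\<Sum>v\<in>?R. H b g v)"
    by (rule sum.subset_diff[OF R_sub finK])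
  also have "(\<Sum>v\<in>K - ?R. H b g v) = (\<Sum>v\<in>K - ?R. r)"
    by (rule sum.cong) (auto simp: H_def R_def)
  also have "\<dots> = (q - card ?R) * r"
    using R_sub by (simp add: card_Diff_subset card_K)
  also have "(\<Sum>v\<in>?R. H b g v) = (\<Sum>v\<in>?R. (if Tq (g * d * v) = 0 then q else 0))"
    by (rule sum.cong) (auto simp: H_def R_def)
  finally show ?thesis .
qed

lemma caseA:
  assumes b: "b \<in> K" and g: "g \<in> K" and e: "1 + b = 0"
  shows "Z1 (b + g * th) = (q - 1) * r + q"
proof -
  have "R (1+b) = {0}" unfolding e R_def using d_nz K_0 by auto
  then show ?thesis using Z1_split[OF b g] by simp
qed

lemma caseB:
  assumes b: "b \<in> K" and g: "g \<in> K" and e: "\<not> (\<exists>v\<in>K. d * v^2 = 1 + b)"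
  shows "Z1 (b + g * th) = q * r"
proof -
  have "R (1+b) = {}" unfolding R_def using e by auto
  then show ?thesis using Z1_split[OF b g] by simp
qed

lemma R_two:
  assumes v0: "v0 \<in> K" "d * v0^2 = e" and e: "e \<noteq> 0"
  shows "R e = {v0, -v0}" "v0 \<noteq> -v0"
proof -
  have "v \<in> R e \<longleftrightarrow> v = v0 \<or> v = -v0" for v
  proof
    assume "v \<in> R e"
    then have "d * v^2 = d * v0^2" using v0 by (simp add: R_def)
    then have "v^2 = v0^2" using d_nz by simp
    then show "v = v0 \<or> v = -v0" by (simp add: power2_eq_iff)
  next
    assume "v = v0 \<or> v = -v0"
    then show "v \<in> R e" using v0 K_neg by (auto simp: R_def)
  qed
  then show "R e = {v0, -v0}" by auto
  have "v0 \<noteq> 0" using v0 e by auto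
  then show "v0 \<noteq> -v0" using neg_self by blast
qed

lemma caseC:
  assumes b: "b \<in> K" and g: "g \<in> K" and v0: "v0 \<in> K" "d * v0^2 = 1 + b" and e: "1 + b \<noteq> 0"
  shows "Z1 (b + g * th) = (q - 2) * r + (if Tq (g * d * v0) = 0 then 2 * q else 0)"
proof -
  have RR: "R (1+b) = {v0, -v0}" "v0 \<noteq> -v0" using R_two[OF v0 e] by auto
  have neg: "Tq (g * d * (- v0)) = - Tq (g * d * v0)" using tr_neg[of m "g*d*v0"] by simp
  have "(\<Sum>v\<in>R (1+b). (if Tq (g * d * v) = 0 then q else 0))
      = (if Tq (g * d * v0) = 0 then q else 0) + (if Tq (g * d * (-v0)) = 0 then q else 0)"
    using RR by simp
  also have "\<dots> = (if Tq (g * d * v0) = 0 then 2 * q else 0)" using neg by simp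
  finally have S: "(\<Sum>v\<in>R (1+b). (if Tq (g * d * v) = 0 then q else 0)) = (if Tq (g * d * v0) = 0 then 2 * q else 0)" .
  have C2: "card (R (1+b)) = 2" using RR by simp
  show ?thesis using Z1_split[OF b g] unfolding S C2 .
qed

end

context F3setup
begin

definition S' :: "'a set" where "S' = {e\<in>K. e \<noteq> 0 \<and> (\<exists>v\<in>K. d * v^2 = e)}"
definition SQ :: "'a set" where "SQ = {b\<in>K. 1 + b \<noteq> 0 \<and> (\<exists>v\<in>K. d * v^2 = 1 + b)}"
definition NB :: "'a set" where "NB = {b\<in>K. 1 + b \<noteq> 0 \<and> \<not> (\<exists>v\<in>K. d * v^2 = 1 + b)}"

abbreviation s :: nat where "s \<equiv> card SQ"

lemma card_S': "q - 1 = 2 * card S'"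
proof -
  have U: "K - {0} = \<Union> (R ` S')"
  proof
    show "K - {0} \<subseteq> \<Union> (R ` S')"
    proof
      fix v assume v: "v \<in> K - {0}"
      then have "d * v^2 \<in> S'" using d_nz d_K by (auto simp: S'_def K_mult K_pow)
      moreover have "v \<in> R (d * v^2)" using v by (simp add: R_def)
      ultimately show "v \<in> \<Union> (R ` S')" by blast
    qed
    show "\<Union> (R ` S') \<subseteq> K - {0}" by (auto simp: R_def S'_def)
  qed
  have "card (K - {0}) = (\<Sum>e\<in>S'. card (R e))"
    unfolding U by (rule card_UN_disjoint) (auto simp: S'_def R_def)
  also have "\<dots> = (\<Sum>e\<in>S'. 2)"
  proof (rule sum.cong[OF refl])
    fix e assume "e \<in> S'"
    then obtain v0 where v0: "v0 \<in> K" "d * v0^2 = e" and e: "e \<noteq> 0" by (auto simp: S'_def)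
    show "card (R e) = 2" using R_two[OF v0 e] by simp
  qed
  finally show ?thesis using K_0 by (simp add: card_K)
qed

lemma card_SQ: "q - 1 = 2 * s"
proof -
  have "bij_betw (\<lambda>b. 1 + b) SQ S'"
    by (rule bij_betw_byWitness[of _ "\<lambda>e. e - 1"]) (auto simp: SQ_def S'_def K_add K_diff K_1)
  then have "s = card S'" by (rule bij_betw_same_card)
  then show ?thesis using card_S' by simp
qed

lemma K_split: "K = insert (-1) (SQ \<union> NB)" "-1 \<notin> SQ \<union> NB" "SQ \<inter> NB = {}"
proof -
  show "K = insert (-1) (SQ \<union> NB)"
    using K_m1 by (auto simp: SQ_def NB_def eq_neg_iff_add_eq_0 add.commute)
  show "-1 \<notin> SQ \<union> NB" by (simp add: SQ_def NB_def)
  show "SQ \<inter> NB = {}" by (auto simp: SQ_def NB_def)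
qed

lemma card_NB: "card NB = s"
proof -
  have "q = card (insert (-1) (SQ \<union> NB))" using K_split(1) card_K by simp
  also have "\<dots> = 1 + (s + card NB)"
    using K_split(2,3) finK K_split(1) by (simp add: card_Un_disjoint)
  finally show ?thesis using card_SQ by simp
qed

definition ZA :: nat where "ZA = (q - 1) * r + q"
definition ZB :: nat where "ZB = q * r"
definition ZC :: nat where "ZC = (q - 2) * r + 2 * q"
definition ZD :: nat where "ZD = (q - 2) * r"

lemma Z_vals: "ZA = 3*r*r + 2*r" "ZB = 3*r*r" "ZC = 3*r*r + 4*r" "ZD + 2*r = 3*r*r"
proof -
  obtain t where t: "q = 3 * t" "r = t" using q_r by blast
  have tt: "t \<ge> 1" using r_pos t by simp
  have a1: "(3*t - 1)*t + 3*t = 3*t*t + 2*t" using tt by (simp add: diff_mult_distrib algebra_simps)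
  have a3: "(3*t - 2)*t + 2*(3*t) = 3*t*t + 4*t" using tt by (simp add: diff_mult_distrib algebra_simps)
  have a4: "(3*t - 2)*t + 2*t = 3*t*t" using tt by (simp add: diff_mult_distrib algebra_simps)
  show "ZA = 3*r*r + 2*r" unfolding ZA_def unfolding t(2) unfolding t(1) by (rule a1)
  show "ZB = 3*r*r" unfolding ZB_def unfolding t(2) unfolding t(1) by simp
  show "ZC = 3*r*r + 4*r" unfolding ZC_def unfolding t(2) unfolding t(1) by (rule a3)
  show "ZD + 2*r = 3*r*r" unfolding ZD_def unfolding t(2) unfolding t(1) by (rule a4)
qed

lemma Z_distinct: "ZA \<noteq> ZB" "ZA \<noteq> ZC" "ZA \<noteq> ZD" "ZB \<noteq> ZC" "ZB \<noteq> ZD" "ZC \<noteq> ZD"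
  using Z_vals r_pos by auto

definition N :: "nat \<Rightarrow> nat" where "N z = card {c. Z1 c = z}"

lemma N_sum: "N z = (\<Sum>b\<in>K. card {g\<in>K. Z1 (b + g * th) = z})"
proof -
  have "N z = card {p \<in> K \<times> K. Z1 (Dm p) = z}" unfolding N_def by (rule card_via_Dm)
  also have "\<dots> = card {p \<in> K \<times> K. Z1 (snd p + fst p * th) = z}" by (simp add: Dm_def)
  also have "\<dots> = (\<Sum>b\<in>K. card {g\<in>K. Z1 (b + g * th) = z})"
    by (rule card_pairs_snd) (simp_all add: finK)
  finally show ?thesis .
qed

lemma N_split: "N z = card {g\<in>K. Z1 (-1 + g * th) = z} + (\<Sum>b\<in>SQ. card {g\<in>K. Z1 (b + g * th) = z})
   + (\<Sum>b\<in>NB. card {g\<in>K. Z1 (b + g * th) = z})"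
proof -
  have fin: "finite SQ" "finite NB" by simp_all
  show ?thesis unfolding N_sum
    by (subst K_split(1), subst sum.insert) (use K_split(2,3) fin in \<open>simp_all add: sum.union_disjoint\<close>)
qed

lemma fA: "card {g\<in>K. Z1 (-1 + g * th) = z} = (if z = ZA then q else 0)"
proof -
  have "Z1 (-1 + g * th) = ZA" if "g \<in> K" for g using caseA[OF K_m1 that] by (simp add: ZA_def)
  then have "{g\<in>K. Z1 (-1 + g * th) = z} = (if z = ZA then K else {})" by auto
  then show ?thesis by (simp add: card_K)
qed

lemma fB: "b \<in> NB \<Longrightarrow> card {g\<in>K. Z1 (b + g * th) = z} = (if z = ZB then q else 0)"
proof -
  assume b: "b \<in> NB"
  have "Z1 (b + g * th) = ZB" if "g \<in> K" for g
    using caseB[OF _ that, of b] b by (simp add: ZB_def NB_def)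
  then have "{g\<in>K. Z1 (b + g * th) = z} = (if z = ZB then K else {})" by auto
  then show ?thesis by (simp add: card_K)
qed

lemma fSQ:
  assumes b: "b \<in> SQ"
  shows "card {g\<in>K. Z1 (b + g * th) = z} = (if z = ZC then r else if z = ZD then q - r else 0)"
proof -
  obtain v0 where v0: "v0 \<in> K" "d * v0^2 = 1 + b" and e: "1 + b \<noteq> 0" and bK: "b \<in> K"
    using b by (auto simp: SQ_def)
  have dv: "d * v0 \<in> K" using d_K v0 by (simp add: K_mult)
  have dv0: "d * v0 \<noteq> 0" using v0 e d_nz by auto
  have Zg: "Z1 (b + g * th) = (if Tq (g * (d * v0)) = 0 then ZC else ZD)" if "g \<in> K" for g
    using caseC[OF bK that v0 e] by (simp add: ZC_def ZD_def mult.assoc)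
  have c0: "card {g\<in>K. Tq (g * (d * v0)) = 0} = r"
    using inner_count[OF dv, of 0] dv0 by simp
  have c1: "card {g\<in>K. Tq (g * (d * v0)) \<noteq> 0} = q - r"
  proof -
    have "{g\<in>K. Tq (g * (d * v0)) \<noteq> 0} = K - {g\<in>K. Tq (g * (d * v0)) = 0}" by auto
    then show ?thesis using c0 by (simp add: card_Diff_subset card_K)
  qed
  show ?thesis
  proof (cases "z = ZC")
    case True
    then have "{g\<in>K. Z1 (b + g * th) = z} = {g\<in>K. Tq (g * (d * v0)) = 0}"
      using Zg Z_distinct by (auto split: if_splits)
    then show ?thesis using c0 True by simp
  next
    case nC: False
    show ?thesis
    proof (cases "z = ZD")
      case True
      then have "{g\<in>K. Z1 (b + g * th) = z} = {g\<in>K. Tq (g * (d * v0)) \<noteq> 0}"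
        using Zg Z_distinct by (auto split: if_splits)
      then show ?thesis using c1 True nC by simp
    next
      case False
      then have "{g\<in>K. Z1 (b + g * th) = z} = {}" using Zg nC by auto
      then show ?thesis using nC False by simp
    qed
  qed
qed

lemma N_vals: "N ZA = q" "N ZB = s * q" "N ZC = s * r" "N ZD = s * (q - r)"
  "z \<notin> {ZA, ZB, ZC, ZD} \<Longrightarrow> N z = 0"
proof -
  have D: "ZA \<noteq> ZB" "ZA \<noteq> ZC" "ZA \<noteq> ZD" "ZB \<noteq> ZC" "ZB \<noteq> ZD" "ZC \<noteq> ZD" by (fact Z_distinct)+
  show "N ZA = q" unfolding N_split fA using fB fSQ D by simp
  show "N ZB = s * q" unfolding N_split fA using fB fSQ D card_NB by (simp add: sum.cong)
  show "N ZC = s * r" unfolding N_split fA using fB fSQ D by simp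
  show "N ZD = s * (q - r)" unfolding N_split fA using fB fSQ D by simp
  show "z \<notin> {ZA, ZB, ZC, ZD} \<Longrightarrow> N z = 0" unfolding N_split fA using fB fSQ by simp
qed

end

lemma arith_final:
  fixes t s q :: nat
  assumes q: "q = 3*t" and qs: "q = 2*s+1" and t: "t \<ge> 1"
  shows "(q^4 - q^3 - q^2 + q) div 6 = (q^2 - 1) * (s * t)"
    "q^3 - q = (q^2 - 1) * q"
    "(q^4 - q^3 + q^2 + q) div 2 - 1 = (q^2 - 1) + (q^2 - 1) * (s * q)"
    "(q^4 - q^3 - q^2 + q) div 3 = (q^2 - 1) * (s * (q - t))"
    "2*q*(q-2) div 3 = q^2 - ((q - 2) * t + 2 * q)"
    "2*q*(q-1) div 3 = q^2 - ((q - 1) * t + q)"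
    "2*q^2 div 3 = q^2 - q * t"
    "2*q*(q+1) div 3 = q^2 - (q - 2) * t"
    "q^2 div 3 = q * t"
proof -
  have q1: "q \<ge> 3" using q t by simp
  have p43: "q^3 \<le> q^4" by (rule power_increasing) (use q1 in auto)
  have p32: "q^2 \<le> q^3" by (rule power_increasing) (use q1 in auto)
  have p21: "q \<le> q^2" using q1 by (simp add: power2_eq_square)
  have p4: "q^2 \<le> q^4 - q^3"
  proof -
    have "q^4 = q^3 * q" by (simp add: power_Suc2[symmetric] numeral_eq_Suc)
    then have "q^4 - q^3 = q^3 * (q - 1)" by (simp add: diff_mult_distrib2)
    moreover have h: "q^3 * 1 \<le> q^3 * (q - 1)" by (rule mult_le_mono2) (use q1 in simp)
    ultimately show ?thesis using p32 by (metis mult_1_right order_trans)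
  qed
  have I1: "int (q^4 - q^3 - q^2 + q) = int q^4 - int q^3 - int q^2 + int q"
    using p43 p4 by (simp add: of_nat_diff)
  have I2: "int (q^4 - q^3 + q^2 + q) = int q^4 - int q^3 + int q^2 + int q"
    using p43 by (simp add: of_nat_diff)
  have sq1: "int (q^2 - 1) = int q^2 - 1" using p21 q1 by (simp add: of_nat_diff)
  have qi: "int q = 3 * int t" "int q = 2 * int s + 1" using q qs by simp_all
  have L1: "q^4 - q^3 - q^2 + q = 6 * ((q^2 - 1) * (s * t))"
  proof -
    have a0: "int (6 * ((q^2 - 1) * (s * t))) = 6 * (int (q^2 - 1) * (int s * int t))"
      by (simp only: of_nat_mult of_nat_numeral)
    have a: "int (6 * ((q^2 - 1) * (s * t))) = (int q^2 - 1) * (3 * int t) * (2 * int s)"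
      unfolding a0 sq1 by (simp add: algebra_simps)
    have b: "(3 * int t) = int q" "2 * int s = int q - 1" using qi by simp_all
    have "int (q^4 - q^3 - q^2 + q) = (int q^2 - 1) * int q * (int q - 1)"
      unfolding I1 by (simp add: algebra_simps power_numeral_reduce)
    then have "int (q^4 - q^3 - q^2 + q) = int (6 * ((q^2 - 1) * (s * t)))"
      unfolding a b by simp
    then show ?thesis by (simp only: of_nat_eq_iff)
  qed
  show "(q^4 - q^3 - q^2 + q) div 6 = (q^2 - 1) * (s * t)" unfolding L1 by simp
  show "q^3 - q = (q^2 - 1) * q" by (simp add: diff_mult_distrib power2_eq_square power3_eq_cube)
  have L3: "q^4 - q^3 + q^2 + q = 2 * ((q^2 - 1) + (q^2 - 1) * (s * q) + 1)"
  proof -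
    have a0: "int (2 * ((q^2 - 1) + (q^2 - 1) * (s * q) + 1)) = 2 * (int (q^2 - 1) + int (q^2 - 1) * (int s * int q) + 1)"
      by (simp only: of_nat_mult of_nat_numeral of_nat_add of_nat_1)
    have a: "int (2 * ((q^2 - 1) + (q^2 - 1) * (s * q) + 1)) = 2 * (int q^2 - 1) + (int q^2 - 1) * (2 * int s) * int q + 2"
      unfolding a0 sq1 by (simp add: algebra_simps)
    have b: "2 * int s = int q - 1" using qi by simp
    have "int (q^4 - q^3 + q^2 + q) = 2 * (int q^2 - 1) + (int q^2 - 1) * (int q - 1) * int q + 2"
      unfolding I2 by (simp add: algebra_simps power_numeral_reduce)
    then have "int (q^4 - q^3 + q^2 + q) = int (2 * ((q^2 - 1) + (q^2 - 1) * (s * q) + 1))"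
      unfolding a b by simp
    then show ?thesis by (simp only: of_nat_eq_iff)
  qed
  show "(q^4 - q^3 + q^2 + q) div 2 - 1 = (q^2 - 1) + (q^2 - 1) * (s * q)" unfolding L3 by simp
  have L4: "q^4 - q^3 - q^2 + q = 3 * ((q^2 - 1) * (s * (q - t)))"
  proof -
    have qt: "int (q - t) = int q - int t" using q by simp
    have a0: "int (3 * ((q^2 - 1) * (s * (q - t)))) = int (q^2 - 1) * int s * (3 * int (q - t))"
      by (simp only: of_nat_mult of_nat_numeral mult_ac)
    have b: "3 * int (q - t) = 2 * int q" using qt qi by simp
    have a: "int (3 * ((q^2 - 1) * (s * (q - t)))) = (int q^2 - 1) * (2 * int s) * int q"
      unfolding a0 b sq1 by (simp add: algebra_simps)
    have b2: "2 * int s = int q - 1" using qi by simp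
    have "int (q^4 - q^3 - q^2 + q) = (int q^2 - 1) * (int q - 1) * int q"
      unfolding I1 by (simp add: algebra_simps power_numeral_reduce)
    then have "int (q^4 - q^3 - q^2 + q) = int (3 * ((q^2 - 1) * (s * (q - t))))"
      unfolding a b2 by simp
    then show ?thesis by (simp only: of_nat_eq_iff)
  qed
  show "(q^4 - q^3 - q^2 + q) div 3 = (q^2 - 1) * (s * (q - t))" unfolding L4 by simp
  show "2*q*(q-2) div 3 = q^2 - ((q - 2) * t + 2 * q)"
    unfolding q using t by (simp add: power2_eq_square diff_mult_distrib algebra_simps)
  show "2*q*(q-1) div 3 = q^2 - ((q - 1) * t + q)"
    unfolding q using t by (simp add: power2_eq_square diff_mult_distrib algebra_simps)
  show "2*q^2 div 3 = q^2 - q * t"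
    unfolding q using t by (simp add: power2_eq_square diff_mult_distrib algebra_simps)
  show "2*q*(q+1) div 3 = q^2 - (q - 2) * t"
    unfolding q using t by (simp add: power2_eq_square diff_mult_distrib algebra_simps)
  show "q^2 div 3 = q * t"
    unfolding q by (simp add: power2_eq_square)
qed


context F3setup
begin

definition cw :: "'a \<times> 'a \<Rightarrow> 'a list" where
  "cw p = map (\<lambda>i. Tr (fst p * \<alpha> ^ (i * (q + 2)) + snd p * \<alpha> ^ i)) [0..<q^2 - 1]"

definition WT :: "'a \<times> 'a \<Rightarrow> nat" where "WT p = hweight (cw p)"

lemma code_eq: "trace_code m \<alpha> = range cw"
proof (rule set_eqI, rule iffI)
  fix c assume "c \<in> trace_code m \<alpha>"
  then obtain a b where "c = map (\<lambda>i. Tr (a * \<alpha> ^ (i * (q + 2)) + b * \<alpha> ^ i)) [0..<q^2 - 1]"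
    unfolding trace_code_def Let_def by auto
  then have "c = cw (a, b)" unfolding cw_def by simp
  then show "c \<in> range cw" by blast
next
  fix c assume "c \<in> range cw"
  then obtain p where "c = cw p" by auto
  then show "c \<in> trace_code m \<alpha>" unfolding trace_code_def Let_def cw_def by blast
qed

lemma hw_map: "hweight (map f [0..<k]) = card {i. i < k \<and> f i \<noteq> 0}"
proof -
  have "hweight (map f [0..<k]) = card {i. i < k \<and> f ([0..<k] ! i) \<noteq> 0}"
    unfolding hweight_def by (simp add: filter_map length_filter_conv_card o_def)
  also have "\<dots> = card {i. i < k \<and> f i \<noteq> 0}"
    by (rule arg_cong[where f=card]) auto
  finally show ?thesis .
qed

lemma hw_card: "hweight (cw p) = card {i. i < n \<and> Tr (fst p * \<alpha> ^ (i * (q + 2)) + snd p * \<alpha> ^ i) \<noteq> 0}"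
  unfolding cw_def by (rule hw_map)

lemma WT_card: "WT p = card {x. Tr (fst p * x ^ (q + 2) + snd p * x) \<noteq> 0}"
proof -
  let ?G = "\<lambda>x. Tr (fst p * x ^ (q + 2) + snd p * x)"
  have f: "Tr (fst p * \<alpha> ^ (i * (q + 2)) + snd p * \<alpha> ^ i) = ?G (\<alpha> ^ i)" for i
    by (simp only: power_mult)
  have "WT p = card {i. i < n \<and> ?G (\<alpha> ^ i) \<noteq> 0}" unfolding WT_def hw_card f ..
  also have "\<dots> = card ((\<lambda>i. \<alpha> ^ i) ` {i. i < n \<and> ?G (\<alpha> ^ i) \<noteq> 0})"
    by (rule card_image[symmetric], rule inj_on_subset[OF alpha_inj]) auto
  also have "(\<lambda>i. \<alpha> ^ i) ` {i. i < n \<and> ?G (\<alpha> ^ i) \<noteq> 0} = {x. ?G x \<noteq> 0}"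
  proof
    show "(\<lambda>i. \<alpha> ^ i) ` {i. i < n \<and> ?G (\<alpha> ^ i) \<noteq> 0} \<subseteq> {x. ?G x \<noteq> 0}" by auto
    show "{x. ?G x \<noteq> 0} \<subseteq> (\<lambda>i. \<alpha> ^ i) ` {i. i < n \<and> ?G (\<alpha> ^ i) \<noteq> 0}"
    proof
      fix x assume x: "x \<in> {x. ?G x \<noteq> 0}"
      then have "x \<noteq> 0" by auto
      then have "x \<in> (\<lambda>i. \<alpha> ^ i) ` {..<n}" using alpha_img by auto
      then obtain i where "i < n" "x = \<alpha> ^ i" by auto
      then show "x \<in> (\<lambda>i. \<alpha> ^ i) ` {i. i < n \<and> ?G (\<alpha> ^ i) \<noteq> 0}" using x by auto
    qed
  qed
  finally show ?thesis .
qed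

lemma WT_Z: "WT p = q^2 - card {x. Tr (fst p * x ^ (q + 2) + snd p * x) = 0}"
proof -
  let ?A = "{x. Tr (fst p * x ^ (q + 2) + snd p * x) = 0}"
  have "{x. Tr (fst p * x ^ (q + 2) + snd p * x) \<noteq> 0} = UNIV - ?A" by auto
  then show ?thesis unfolding WT_card by (simp add: card_Diff_subset cardF)
qed

lemma pow_inj: "inj (\<lambda>x::'a. x ^ (q + 2))"
proof (rule injI)
  fix x y :: 'a assume e: "x ^ (q + 2) = y ^ (q + 2)"
  show "x = y"
  proof (cases "y = 0")
    case True then show ?thesis using e by simp
  next
    case False
    define u where "u = x / y"
    have u1: "u ^ (q + 2) = 1" using e False by (simp add: u_def power_divide)
    have u0: "u \<noteq> 0"
    proof
      assume "u = 0"
      then have "u ^ (q + 2) = 0" by simp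
      then show False using u1 by simp
    qed
    have u2: "u ^ (q^2 - 1) = 1" by (rule fermat1[OF u0])
    have qq: "q^2 - 1 = (q + 2) * (q - 2) + 3"
    proof -
      obtain t where t: "q = t + 3" using q_ge3 by (metis add.commute le_Suc_ex)
      show ?thesis unfolding t by (simp add: power2_eq_square algebra_simps)
    qed
    have "u ^ (q^2 - 1) = (u ^ (q + 2)) ^ (q - 2) * u ^ 3" unfolding qq by (simp only: power_add power_mult)
    then have u3: "u ^ 3 = 1" using u1 u2 by simp
    have "(u - 1) ^ 3 = u ^ 3 - 1 ^ 3" using frob3_diff[OF c3, of u 1 1] by simp
    then have "(u - 1) ^ 3 = 0" using u3 by simp
    then have "u = 1" by simp
    then show ?thesis using False by (simp add: u_def)
  qed
qed

lemma pow_surj: "\<exists>s. s ^ (q + 2) = (y::'a)"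
  using finite_UNIV_inj_surj[OF _ pow_inj] by (metis finite surjD)

definition sa :: "'a \<Rightarrow> 'a" where "sa a = (SOME s. s ^ (q + 2) = inverse a)"

lemma sa: "sa a ^ (q + 2) = inverse a"
  unfolding sa_def by (rule someI_ex[OF pow_surj])

lemma sa_nz: "a \<noteq> 0 \<Longrightarrow> sa a \<noteq> 0"
proof
  assume a: "a \<noteq> 0" and "sa a = 0"
  then have "inverse a = 0" using sa[of a] by simp
  then show False using a by simp
qed

lemma Z1_le: "Z1 c \<le> q^2"
  unfolding Z1_def using card_mono[of UNIV "{y. Tr (y ^ (q + 2) + c * y) = 0}"] cardF by simp

lemma WT_a:
  assumes a: "a \<noteq> 0"
  shows "WT (a, b) = q^2 - Z1 (b * sa a)"
proof -
  let ?s = "sa a"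
  have s: "?s \<noteq> 0" "a * ?s ^ (q + 2) = 1" using sa_nz[OF a] sa[of a] a by simp_all
  have "bij_betw (\<lambda>y. ?s * y) {y. Tr (y ^ (q + 2) + (b * ?s) * y) = 0} {x. Tr (a * x ^ (q + 2) + b * x) = 0}"
  proof (rule bij_betw_byWitness[of _ "\<lambda>x. x / ?s"])
    have e: "a * (?s * y) ^ (q + 2) + b * (?s * y) = y ^ (q + 2) + (b * ?s) * y" for y
    proof -
      have "a * (?s * y) ^ (q + 2) = (a * ?s ^ (q + 2)) * y ^ (q + 2)" by (simp only: power_mult_distrib mult.assoc)
      then have "a * (?s * y) ^ (q + 2) = y ^ (q + 2)" using s(2) by (simp only: mult_1_left)
      then show ?thesis by (simp only: mult.assoc)
    qed
    show "(\<lambda>y. ?s * y) ` {y. Tr (y ^ (q + 2) + (b * ?s) * y) = 0} \<subseteq> {x. Tr (a * x ^ (q + 2) + b * x) = 0}"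
    proof
      fix z assume "z \<in> (\<lambda>y. ?s * y) ` {y. Tr (y ^ (q + 2) + (b * ?s) * y) = 0}"
      then obtain y where y: "Tr (y ^ (q + 2) + (b * ?s) * y) = 0" "z = ?s * y" by auto
      have "Tr (a * z ^ (q + 2) + b * z) = 0" unfolding y(2) e by (rule y(1))
      then show "z \<in> {x. Tr (a * x ^ (q + 2) + b * x) = 0}" by simp
    qed
    show "(\<lambda>x. x / ?s) ` {x. Tr (a * x ^ (q + 2) + b * x) = 0} \<subseteq> {y. Tr (y ^ (q + 2) + (b * ?s) * y) = 0}"
    proof
      fix z assume "z \<in> (\<lambda>x. x / ?s) ` {x. Tr (a * x ^ (q + 2) + b * x) = 0}"
      then obtain x where x: "Tr (a * x ^ (q + 2) + b * x) = 0" "z = x / ?s" by auto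
      have "?s * z = x" using x(2) s by simp
      then have "Tr (z ^ (q + 2) + (b * ?s) * z) = 0" using e[of z] x(1) by (simp only:)
      then show "z \<in> {y. Tr (y ^ (q + 2) + (b * ?s) * y) = 0}" by simp
    qed
  qed (use s in auto)
  then have "card {x. Tr (a * x ^ (q + 2) + b * x) = 0} = Z1 (b * ?s)"
    unfolding Z1_def by (simp add: bij_betw_same_card)
  then show ?thesis using WT_Z[of "(a,b)"] by simp
qed

lemma WT_0b:
  assumes b: "b \<noteq> 0"
  shows "WT (0, b) = q^2 - ZB"
proof -
  have "bij_betw (\<lambda>x. b * x) {x. Tr (b * x) = 0} {y. Tr y = 0}"
    by (rule bij_betw_byWitness[of _ "\<lambda>y. y / b"]) (use b in auto)
  then have "card {x. Tr (0 * x ^ (q + 2) + b * x) = 0} = card {y. Tr y = 0}"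
    by (simp add: bij_betw_same_card)
  also have "\<dots> = q^2 div 3" by (rule fiberF) simp
  also have "\<dots> = ZB"
  proof -
    obtain t where t: "q = 3 * t" "r = t" using q_r by blast
    show ?thesis unfolding ZB_def unfolding t(2) unfolding t(1) by (simp add: power2_eq_square)
  qed
  finally show ?thesis using WT_Z[of "(0,b)"] by simp
qed

lemma WT_00: "WT (0, 0) = 0"
  using WT_Z[of "(0,0)"] cardF by simp

end

context F3setup
begin

lemma q2_val: "q^2 = 9 * r * r"
proof -
  obtain t where t: "q = 3 * t" "r = t" using q_r by blast
  show ?thesis unfolding t(2) unfolding t(1) by (simp add: power2_eq_square)
qed

lemma Z_lt: "ZA < q^2" "ZB < q^2" "ZC < q^2" "ZD < q^2"
  using Z_vals r_pos q2_val by (auto simp: algebra_simps)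

lemma ZC_max: "ZA \<le> ZC" "ZB \<le> ZC" "ZD \<le> ZC"
  using Z_vals by auto

lemma Z1_in: "Z1 c \<in> {ZA, ZB, ZC, ZD}"
proof (rule ccontr)
  assume "Z1 c \<notin> {ZA, ZB, ZC, ZD}"
  then have "N (Z1 c) = 0" by (rule N_vals(5))
  moreover have "c \<in> {c'. Z1 c' = Z1 c}" by simp
  ultimately show False unfolding N_def by (metis card_0_eq empty_iff finite)
qed

lemma M_val:
  "card {c. q^2 - Z1 c = w} = (if w = q^2 - ZA then N ZA else if w = q^2 - ZB then N ZB
     else if w = q^2 - ZC then N ZC else if w = q^2 - ZD then N ZD else 0)"
proof -
  have Zl: "Z1 c \<le> q^2" for c by (rule Z1_le)
  have eqv: "q^2 - Z1 c = q^2 - Z \<longleftrightarrow> Z1 c = Z" if "Z < q^2" for c Z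
    using Zl[of c] that by auto
  have D: "ZA \<noteq> ZB" "ZA \<noteq> ZC" "ZA \<noteq> ZD" "ZB \<noteq> ZC" "ZB \<noteq> ZD" "ZC \<noteq> ZD" by (fact Z_distinct)+
  have D2: "q^2 - ZA \<noteq> q^2 - ZB" "q^2 - ZA \<noteq> q^2 - ZC" "q^2 - ZA \<noteq> q^2 - ZD"
    "q^2 - ZB \<noteq> q^2 - ZC" "q^2 - ZB \<noteq> q^2 - ZD" "q^2 - ZC \<noteq> q^2 - ZD"
    using D Z_lt by auto
  show ?thesis
  proof (cases "w = q^2 - ZA")
    case True
    then show ?thesis unfolding N_def using eqv[OF Z_lt(1)] by simp
  next
    case nA: False
    show ?thesis
    proof (cases "w = q^2 - ZB")
      case True
      then show ?thesis unfolding N_def using eqv[OF Z_lt(2)] nA by simp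
    next
      case nB: False
      show ?thesis
      proof (cases "w = q^2 - ZC")
        case True
        then show ?thesis unfolding N_def using eqv[OF Z_lt(3)] nA nB by simp
      next
        case nC: False
        show ?thesis
        proof (cases "w = q^2 - ZD")
          case True
          then show ?thesis unfolding N_def using eqv[OF Z_lt(4)] nA nB nC by simp
        next
          case nD: False
          have "{c. q^2 - Z1 c = w} = {}"
          proof -
            have "q^2 - Z1 c \<noteq> w" for c using Z1_in[of c] nA nB nC nD by auto
            then show ?thesis by auto
          qed
          then show ?thesis using nA nB nC nD by simp
        qed
      qed
    qed
  qed
qed

lemma WT_a_count:
  assumes a: "a \<noteq> 0"
  shows "card {b. WT (a, b) = w} = card {c. q^2 - Z1 c = w}"
proof -
  have "bij_betw (\<lambda>b. b * sa a) {b. WT (a, b) = w} {c. q^2 - Z1 c = w}"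
    by (rule bij_betw_byWitness[of _ "\<lambda>c. c / sa a"]) (use sa_nz[OF a] WT_a[OF a] in auto)
  then show ?thesis by (rule bij_betw_same_card)
qed

lemma total_count:
  "card {p. WT p = w} = card {b. WT (0, b) = w} + (q^2 - 1) * card {c. q^2 - Z1 c = w}"
proof -
  have U: "{p. WT p = w} = Pair (0::'a) ` {b. WT (0, b) = w} \<union> Sigma (UNIV - {0}) (\<lambda>a. {b. WT (a, b) = w})"
    by auto
  have "card {p. WT p = w} = card (Pair (0::'a) ` {b. WT (0, b) = w}) + card (Sigma (UNIV - {0}) (\<lambda>a. {b. WT (a, b) = w}))"
    unfolding U by (rule card_Un_disjoint) auto
  also have "card (Pair (0::'a) ` {b. WT (0, b) = w}) = card {b. WT (0, b) = w}"
    by (rule card_image) (auto simp: inj_on_def)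
  also have "card (Sigma (UNIV - {0}) (\<lambda>a. {b. WT (a, b) = w})) = (\<Sum>a\<in>UNIV - {0}. card {b. WT (a, b) = w})"
    by simp
  also have "\<dots> = (\<Sum>a\<in>UNIV - {0::'a}. card {c. q^2 - Z1 c = w})"
    by (rule sum.cong) (auto simp: WT_a_count)
  also have "\<dots> = (q^2 - 1) * card {c. q^2 - Z1 c = w}" using card_nz by simp
  finally show ?thesis .
qed

lemma WT_pos: "p \<noteq> (0, 0) \<Longrightarrow> WT p \<in> {q^2 - ZA, q^2 - ZB, q^2 - ZC, q^2 - ZD}"
proof -
  assume p: "p \<noteq> (0, 0)"
  obtain a b where ab: "p = (a, b)" by (cases p)
  show ?thesis
  proof (cases "a = 0")
    case True
    then have "b \<noteq> 0" using p ab by simp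
    then show ?thesis using WT_0b ab True by simp
  next
    case False
    then show ?thesis using WT_a[OF False, of b] Z1_in[of "b * sa a"] ab by auto
  qed
qed

lemma WT_zero: "WT p = 0 \<Longrightarrow> p = (0, 0)"
proof (rule ccontr)
  assume w: "WT p = 0" and p: "p \<noteq> (0, 0)"
  have "WT p \<in> {q^2 - ZA, q^2 - ZB, q^2 - ZC, q^2 - ZD}" by (rule WT_pos[OF p])
  moreover have "q^2 - ZA \<noteq> 0" "q^2 - ZB \<noteq> 0" "q^2 - ZC \<noteq> 0" "q^2 - ZD \<noteq> 0" using Z_lt by simp_all
  ultimately show False using w by auto
qed

lemma zero_count:
  "card {b. WT (0, b) = w} = (if w = 0 then 1 else 0) + (if w = q^2 - ZB then q^2 - 1 else 0)"
proof -
  have nz: "q^2 - ZB \<noteq> 0" using Z_lt by simp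
  have WT0: "WT (0, b) = (if b = 0 then 0 else q^2 - ZB)" for b using WT_00 WT_0b by simp
  have "{b. WT (0, b) = w} = (if w = 0 then {0} else {}) \<union> (if w = q^2 - ZB then UNIV - {0} else {})"
    unfolding WT0 using nz by auto
  moreover have "card ((if w = 0 then {0} else {}) \<union> (if w = q^2 - ZB then UNIV - {0} else ({}::'a set)))
     = (if w = 0 then 1 else 0) + (if w = q^2 - ZB then q^2 - 1 else 0)"
    using nz card_nz by (auto simp: card_Un_disjoint)
  ultimately show ?thesis by simp
qed

lemma lin_aux: "(a - a') * X + (b - b') * Y = (a * X + b * Y) - (a' * X + b' * (Y::'a))"
  by (simp add: algebra_simps)

lemma cw_inj: "inj cw"
proof (rule injI)
  fix p p' assume e: "cw p = cw p'"
  let ?f = "\<lambda>p i. Tr (fst p * \<alpha> ^ (i * (q + 2)) + snd p * \<alpha> ^ i)"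
  let ?d = "(fst p - fst p', snd p - snd p')"
  have fe: "?f p i = ?f p' i" if "i < n" for i
  proof -
    have "cw p ! i = cw p' ! i" using e by simp
    then show ?thesis using that unfolding cw_def by simp
  qed
  have fd: "?f ?d i = ?f p i - ?f p' i" for i
    unfolding fst_conv snd_conv lin_aux by (rule tr_diff[OF c3])
  have E: "{i. i < n \<and> ?f ?d i \<noteq> 0} = {}"
  proof -
    have "?f ?d i = 0" if "i < n" for i using fd[of i] fe[OF that] by (simp only: diff_self)
    then show ?thesis by blast
  qed
  have "WT ?d = 0" unfolding WT_def hw_card E by (rule card.empty)
  then have "?d = (0, 0)" by (rule WT_zero)
  then show "p = p'" by (simp add: prod_eq_iff)
qed

lemma card_code_w: "card {c \<in> trace_code m \<alpha>. hweight c = w} = card {p. WT p = w}"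
proof -
  have "{c \<in> trace_code m \<alpha>. hweight c = w} = cw ` {p. WT p = w}"
    unfolding code_eq WT_def by auto
  then show ?thesis using cw_inj by (simp add: card_image inj_on_subset)
qed

lemma s_pos: "s \<ge> 1" using card_SQ q_ge3 by simp

lemma counts:
  "card {p. WT p = 0} = 1"
  "card {p. WT p = q^2 - ZC} = (q^2 - 1) * (s * r)"
  "card {p. WT p = q^2 - ZA} = (q^2 - 1) * q"
  "card {p. WT p = q^2 - ZB} = (q^2 - 1) + (q^2 - 1) * (s * q)"
  "card {p. WT p = q^2 - ZD} = (q^2 - 1) * (s * (q - r))"
proof -
  have D: "ZA \<noteq> ZB" "ZA \<noteq> ZC" "ZA \<noteq> ZD" "ZB \<noteq> ZC" "ZB \<noteq> ZD" "ZC \<noteq> ZD" by (fact Z_distinct)+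
  have D2: "q^2 - ZA \<noteq> q^2 - ZB" "q^2 - ZA \<noteq> q^2 - ZC" "q^2 - ZA \<noteq> q^2 - ZD"
    "q^2 - ZB \<noteq> q^2 - ZC" "q^2 - ZB \<noteq> q^2 - ZD" "q^2 - ZC \<noteq> q^2 - ZD"
    using D Z_lt by auto
  have P: "q^2 - ZA \<noteq> 0" "q^2 - ZB \<noteq> 0" "q^2 - ZC \<noteq> 0" "q^2 - ZD \<noteq> 0" using Z_lt by auto
  show "card {p. WT p = 0} = 1"
    unfolding total_count zero_count M_val using P by simp
  show "card {p. WT p = q^2 - ZC} = (q^2 - 1) * (s * r)"
    unfolding total_count zero_count M_val using P D2 N_vals by simp
  show "card {p. WT p = q^2 - ZA} = (q^2 - 1) * q"
    unfolding total_count zero_count M_val using P D2 N_vals by simp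
  show "card {p. WT p = q^2 - ZB} = (q^2 - 1) + (q^2 - 1) * (s * q)"
    unfolding total_count zero_count M_val using P D2 N_vals by simp
  show "card {p. WT p = q^2 - ZD} = (q^2 - 1) * (s * (q - r))"
    unfolding total_count zero_count M_val using P D2 N_vals by simp
qed

end

context F3setup
begin

lemma main:
  "(\<forall>c\<in>trace_code m \<alpha>. length c = q^2 - 1)
    \<and> ternary_dim (trace_code m \<alpha>) = 4 * m
    \<and> min_dist (trace_code m \<alpha>) = 2 * q * (q - 2) div 3
    \<and> card {c \<in> trace_code m \<alpha>. hweight c = 0} = 1
    \<and> card {c \<in> trace_code m \<alpha>. hweight c = 2 * q * (q - 2) div 3} = (q^4 - q^3 - q^2 + q) div 6
    \<and> card {c \<in> trace_code m \<alpha>. hweight c = 2 * q * (q - 1) div 3} = q^3 - q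
    \<and> card {c \<in> trace_code m \<alpha>. hweight c = 2 * q^2 div 3} = (q^4 - q^3 + q^2 + q) div 2 - 1
    \<and> card {c \<in> trace_code m \<alpha>. hweight c = 2 * q * (q + 1) div 3} = (q^4 - q^3 - q^2 + q) div 3"
proof -
  have qS: "q = 2 * s + 1" using card_SQ q_ge3 by simp
  note AF = arith_final[OF q_r qS r_pos]
  have WC: "2 * q * (q - 2) div 3 = q^2 - ZC" unfolding ZC_def by (rule AF(5))
  have WA: "2 * q * (q - 1) div 3 = q^2 - ZA" unfolding ZA_def by (rule AF(6))
  have WB: "2 * q^2 div 3 = q^2 - ZB" unfolding ZB_def by (rule AF(7))
  have WD: "2 * q * (q + 1) div 3 = q^2 - ZD" unfolding ZD_def by (rule AF(8))
  have len: "\<forall>c\<in>trace_code m \<alpha>. length c = q^2 - 1" unfolding code_eq cw_def by auto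
  have cardC: "card (trace_code m \<alpha>) = 3 ^ (4 * m)"
  proof -
    have "card (trace_code m \<alpha>) = card (UNIV :: ('a \<times> 'a) set)"
      unfolding code_eq using cw_inj by (simp add: card_image)
    also have "\<dots> = card (UNIV::'a set) * card (UNIV::'a set)"
      by (simp only: UNIV_Times_UNIV[symmetric] card_cartesian_product)
    also have "\<dots> = 3 ^ (4 * m)" unfolding cardF
      by (simp only: power_mult[symmetric] power_add[symmetric]) simp
    finally show ?thesis .
  qed
  have dim: "ternary_dim (trace_code m \<alpha>) = 4 * m"
    unfolding ternary_dim_def cardC
    by (rule the_equality) (simp_all add: power_inject_exp)
  have cC: "card {p. WT p = q^2 - ZC} = (q^2 - 1) * (s * r)" by (rule counts(2))
  have ex: "\<exists>p. WT p = q^2 - ZC"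
  proof (rule ccontr)
    assume "\<not> ?thesis"
    then have "{p. WT p = q^2 - ZC} = {}" by blast
    then have "(q^2 - 1) * (s * r) = 0" using cC by (metis card.empty)
    moreover have "q^2 - 1 > 0" using mult_le_mono[OF q_ge3 q_ge3] by (simp add: power2_eq_square)
    ultimately show False using s_pos r_pos by simp
  qed
  have md: "min_dist (trace_code m \<alpha>) = q^2 - ZC"
  proof -
    let ?S = "{hweight c | c. c \<in> trace_code m \<alpha> \<and> hweight c \<noteq> 0}"
    have sub: "?S \<subseteq> {q^2 - ZA, q^2 - ZB, q^2 - ZC, q^2 - ZD}"
    proof
      fix w assume "w \<in> ?S"
      then obtain p where p: "w = WT p" "WT p \<noteq> 0" unfolding code_eq WT_def by auto
      then have "p \<noteq> (0, 0)" using WT_00 by auto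
      then show "w \<in> {q^2 - ZA, q^2 - ZB, q^2 - ZC, q^2 - ZD}" using WT_pos p by simp
    qed
    have fin: "finite ?S" by (rule finite_subset[OF sub]) simp
    have lb: "q^2 - ZC \<le> w" if "w \<in> ?S" for w
      using sub that ZC_max by auto
    have mem: "q^2 - ZC \<in> ?S"
    proof -
      obtain p where p: "WT p = q^2 - ZC" using ex by blast
      have nz: "q^2 - ZC \<noteq> 0" using Z_lt by simp
      have "q^2 - ZC = hweight (cw p) \<and> cw p \<in> range cw \<and> hweight (cw p) \<noteq> 0"
        using p nz unfolding WT_def by simp
      then show ?thesis unfolding code_eq by blast
    qed
    show ?thesis unfolding min_dist_def by (rule Min_eqI[OF fin lb mem])
  qed
  show ?thesis
    unfolding WC WA WB WD card_code_w counts AF(1) AF(2) AF(3) AF(4)[symmetric]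
    using len dim md counts(5) by simp
qed

end

theorem corollary1:
  fixes m :: nat and \<alpha> :: "'a::{field,finite}"
  assumes "m \<ge> 1"
    and "card (UNIV :: 'a set) = (3 ^ m) ^ 2"
    and "primitive_elem \<alpha>"
  defines "q \<equiv> 3 ^ m"
  defines "C \<equiv> trace_code m \<alpha>"
  shows "(\<forall>c\<in>C. length c = q^2 - 1)
    \<and> ternary_dim C = 4 * m
    \<and> min_dist C = 2 * q * (q - 2) div 3
    \<and> card {c \<in> C. hweight c = 0} = 1
    \<and> card {c \<in> C. hweight c = 2 * q * (q - 2) div 3} = (q^4 - q^3 - q^2 + q) div 6
    \<and> card {c \<in> C. hweight c = 2 * q * (q - 1) div 3} = q^3 - q
    \<and> card {c \<in> C. hweight c = 2 * q^2 div 3} = (q^4 - q^3 + q^2 + q) div 2 - 1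
    \<and> card {c \<in> C. hweight c = 2 * q * (q + 1) div 3} = (q^4 - q^3 - q^2 + q) div 3"
proof -
  have "F3setup m \<alpha>" by (unfold_locales) (use assms in auto)
  then show ?thesis unfolding q_def C_def by (rule F3setup.main)
qed


end
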